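(* In $\mathrm{HMF}(\mathbb{C}^2,\Gamma_W,W)$, for each $1\le i\le p-1$ and $1\le j\le q-1$, the objects $K_{x,i}$ and $K_{y,j}$ are orthogonal to $K_f$ (all graded morphisms in both directions vanish).
   Context: Let $p,q\ge2$ be integers and $W=x^py+xy^q$. Let $L$ be the abelian group generated by $\vec x,\vec y,\vec c$ modulo $p\vec x+\vec y=\vec x+q\vec y=\vec c$; $S=\mathbb{C}[x,y]$ is $L$-graded with $\deg x=\vec x$, $\deg y=\vec y$, and $R=S/(W)$; $M(l)_k=M_{k+l}$. $\mathrm{HMF}(\mathbb{C}^2,\Gamma_W,W)$ is the homotopy category of $L$-graded matrix factorisations of $W$, equivalent to $D^b(\mathrm{gr}R)/\mathrm{Perf}(\mathrm{gr}R)$, in which a finitely generated $L$-graded $R$-module is identified with its stabilisation; $\mathrm{Hom}^n(X,Y)=\mathrm{Hom}(X,Y[n])$. Let $f=x^{p-1}+y^{q-1}$. $K_x=R/(x)$, $K_y=R/(y)$, $K_f=R/(f)$, $K_{x,i}=K_x((i+1-p)\vec x)$, $K_{y,j}=K_y((j+1-q)\vec y)$. *)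

theory Defs
  imports "HOL-Computational_Algebra.Polynomial" Complex_Main
begin

text \<open>Bivariate polynomials C[x,y]: polynomials in y whose coefficients are
polynomials in x.  The coefficient of x^a y^b in P is mcoeff P a b.\<close>

type_synonym bpoly = "complex poly poly"

definition mcoeff :: "bpoly \<Rightarrow> nat \<Rightarrow> nat \<Rightarrow> complex" where
  "mcoeff P a b = coeff (coeff P b) a"

definition X :: bpoly where "X = [:[:0, 1:]:]"
definition Y :: bpoly where "Y = [:0, 1:]"

definition Wpot :: "nat \<Rightarrow> nat \<Rightarrow> bpoly" where
  "Wpot p q = X ^ p * Y + X * Y ^ q"

definition fpol :: "nat \<Rightarrow> nat \<Rightarrow> bpoly" where
  "fpol p q = X ^ (p - 1) + Y ^ (q - 1)"

text \<open>The grading group L.  Eliminating c = p x + y, L is Z x + Z y modulo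
(p-1) x = (q-1) y.  An element a x + b y is represented by (a,b) :: int \<times> int;
Leq decides equality in L.\<close>

type_synonym deg = "int \<times> int"

definition dadd :: "deg \<Rightarrow> deg \<Rightarrow> deg" where
  "dadd u v = (fst u + fst v, snd u + snd v)"
definition dsub :: "deg \<Rightarrow> deg \<Rightarrow> deg" where
  "dsub u v = (fst u - fst v, snd u - snd v)"

definition Leq :: "nat \<Rightarrow> nat \<Rightarrow> deg \<Rightarrow> deg \<Rightarrow> bool" where
  "Leq p q u v \<longleftrightarrow> (\<exists>k::int. fst u - fst v = k * (int p - 1) \<and> snd u - snd v = - k * (int q - 1))"

definition cdeg :: "nat \<Rightarrow> deg" where "cdeg p = (int p, 1)"

definition homog :: "nat \<Rightarrow> nat \<Rightarrow> bpoly \<Rightarrow> deg \<Rightarrow> bool" where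
  "homog p q P d \<longleftrightarrow> (\<forall>a b. mcoeff P a b \<noteq> 0 \<longrightarrow> Leq p q (int a, int b) d)"

text \<open>An L-graded matrix factorisation  F1 --A--> F0 --B--> F1(c)  of W,
with F0, F1 free with homogeneous basis generators of degrees d0, d1.
Entry A i j (i-th basis vector of F0, j-th of F1) has degree d1!j - d0!i,
entry B j i has degree d0!i + c - d1!j.\<close>

record mf =
  d0 :: "deg list"
  d1 :: "deg list"
  mA :: "nat \<Rightarrow> nat \<Rightarrow> bpoly"
  mB :: "nat \<Rightarrow> nat \<Rightarrow> bpoly"

definition is_mf :: "nat \<Rightarrow> nat \<Rightarrow> mf \<Rightarrow> bool" where
  "is_mf p q M \<longleftrightarrow>
    (\<forall>i<length (d0 M). \<forall>j<length (d1 M).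
        homog p q (mA M i j) (dsub (d1 M ! j) (d0 M ! i))
      \<and> homog p q (mB M j i) (dsub (dadd (d0 M ! i) (cdeg p)) (d1 M ! j)))
  \<and> (\<forall>i<length (d0 M). \<forall>k<length (d0 M).
        (\<Sum>j<length (d1 M). mA M i j * mB M j k) = (if i = k then Wpot p q else 0))
  \<and> (\<forall>j<length (d1 M). \<forall>l<length (d1 M).
        (\<Sum>i<length (d0 M). mB M j i * mA M i l) = (if j = l then Wpot p q else 0))"

definition is_mor :: "nat \<Rightarrow> nat \<Rightarrow> mf \<Rightarrow> mf \<Rightarrow>
    (nat \<Rightarrow> nat \<Rightarrow> bpoly) \<Rightarrow> (nat \<Rightarrow> nat \<Rightarrow> bpoly) \<Rightarrow> bool" where
  "is_mor p q M N u0 u1 \<longleftrightarrow>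
    (\<forall>i<length (d0 N). \<forall>j<length (d0 M). homog p q (u0 i j) (dsub (d0 M ! j) (d0 N ! i)))
  \<and> (\<forall>i<length (d1 N). \<forall>j<length (d1 M). homog p q (u1 i j) (dsub (d1 M ! j) (d1 N ! i)))
  \<and> (\<forall>i<length (d0 N). \<forall>j<length (d1 M).
       (\<Sum>k<length (d0 M). u0 i k * mA M k j) = (\<Sum>k<length (d1 N). mA N i k * u1 k j))
  \<and> (\<forall>i<length (d1 N). \<forall>j<length (d0 M).
       (\<Sum>k<length (d1 M). u1 i k * mB M k j) = (\<Sum>k<length (d0 N). mB N i k * u0 k j))"

definition null_htp :: "nat \<Rightarrow> nat \<Rightarrow> mf \<Rightarrow> mf \<Rightarrow>
    (nat \<Rightarrow> nat \<Rightarrow> bpoly) \<Rightarrow> (nat \<Rightarrow> nat \<Rightarrow> bpoly) \<Rightarrow> bool" where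
  "null_htp p q M N u0 u1 \<longleftrightarrow>
    (\<exists>h0 h1.
      (\<forall>i<length (d1 N). \<forall>j<length (d0 M). homog p q (h0 i j) (dsub (d0 M ! j) (d1 N ! i)))
    \<and> (\<forall>i<length (d0 N). \<forall>j<length (d1 M).
         homog p q (h1 i j) (dsub (dsub (d1 M ! j) (cdeg p)) (d0 N ! i)))
    \<and> (\<forall>i<length (d0 N). \<forall>j<length (d0 M).
         u0 i j = (\<Sum>k<length (d1 N). mA N i k * h0 k j) + (\<Sum>k<length (d1 M). h1 i k * mB M k j))
    \<and> (\<forall>i<length (d1 N). \<forall>j<length (d1 M).
         u1 i j = (\<Sum>k<length (d0 M). h0 i k * mA M k j) + (\<Sum>k<length (d0 N). mB N i k * h1 k j)))"

text \<open>Twist M(l): M(l)_k = M_(k+l), so a generator of degree d acquires degree d - l.\<close>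
definition twist :: "deg \<Rightarrow> mf \<Rightarrow> mf" where
  "twist l M = M\<lparr>d0 := map (\<lambda>d. dsub d l) (d0 M), d1 := map (\<lambda>d. dsub d l) (d1 M)\<rparr>"

text \<open>Shift [1]:  (F1 --A--> F0 --B--> F1(c))  \<mapsto>  (F0 --(-B)--> F1(c) --(-A)--> F0(c)).\<close>
definition shift1 :: "nat \<Rightarrow> mf \<Rightarrow> mf" where
  "shift1 p M = \<lparr>d0 = map (\<lambda>d. dsub d (cdeg p)) (d1 M), d1 = d0 M,
                 mA = (\<lambda>i j. - mB M i j), mB = (\<lambda>i j. - mA M i j)\<rparr>"

text \<open>Shift [n] for n :: int; since [2] = (c) on the nose, [2k] = (k c) and [2k+1] = [1] o (k c).\<close>
definition shiftn :: "nat \<Rightarrow> int \<Rightarrow> mf \<Rightarrow> mf" where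
  "shiftn p n M = (let l = (n div 2 * int p, n div 2) in
      if even n then twist l M else shift1 p (twist l M))"

definition hom_vanish :: "nat \<Rightarrow> nat \<Rightarrow> mf \<Rightarrow> mf \<Rightarrow> bool" where
  "hom_vanish p q M N \<longleftrightarrow>
    (\<forall>n::int. \<forall>u0 u1. is_mor p q M (shiftn p n N) u0 u1 \<longrightarrow> null_htp p q M (shiftn p n N) u0 u1)"

definition orthogonal :: "nat \<Rightarrow> nat \<Rightarrow> mf \<Rightarrow> mf \<Rightarrow> bool" where
  "orthogonal p q M N \<longleftrightarrow> hom_vanish p q M N \<and> hom_vanish p q N M"

text \<open>Stabilisations (matrix factorisations) of R/(x), R/(y), R/(f):
 R/(g) = coker (S(-deg g) --g--> S) with W = g * (W/g).\<close>
definition Kx :: "nat \<Rightarrow> nat \<Rightarrow> mf" where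
  "Kx p q = \<lparr>d0 = [(0,0)], d1 = [(1,0)], mA = (\<lambda>_ _. X), mB = (\<lambda>_ _. Y * fpol p q)\<rparr>"
definition Ky :: "nat \<Rightarrow> nat \<Rightarrow> mf" where
  "Ky p q = \<lparr>d0 = [(0,0)], d1 = [(0,1)], mA = (\<lambda>_ _. Y), mB = (\<lambda>_ _. X * fpol p q)\<rparr>"
definition Kf :: "nat \<Rightarrow> nat \<Rightarrow> mf" where
  "Kf p q = \<lparr>d0 = [(0,0)], d1 = [(int p - 1, 0)], mA = (\<lambda>_ _. fpol p q), mB = (\<lambda>_ _. X * Y)\<rparr>"

definition Kxi :: "nat \<Rightarrow> nat \<Rightarrow> nat \<Rightarrow> mf" where
  "Kxi p q i = twist (int i + 1 - int p, 0) (Kx p q)"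
definition Kyj :: "nat \<Rightarrow> nat \<Rightarrow> nat \<Rightarrow> mf" where
  "Kyj p q j = twist (0, int j + 1 - int q) (Ky p q)"

end

theory Submission
  imports Defs
begin

lemma mcoeff_eq_iff: "P = Q \<longleftrightarrow> (\<forall>a b. mcoeff P a b = mcoeff Q a b)"
  by (auto simp: mcoeff_def poly_eq_iff)

lemma mcoeff_add[simp]: "mcoeff (P + Q) a b = mcoeff P a b + mcoeff Q a b"
  by (simp add: mcoeff_def)
lemma mcoeff_diff[simp]: "mcoeff (P - Q) a b = mcoeff P a b - mcoeff Q a b"
  by (simp add: mcoeff_def)
lemma mcoeff_uminus[simp]: "mcoeff (- P) a b = - mcoeff P a b"
  by (simp add: mcoeff_def)
lemma mcoeff_0[simp]: "mcoeff 0 a b = 0"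
  by (simp add: mcoeff_def)

lemma Xpow: "X ^ n = [:monom 1 n:]"
  by (simp add: X_def monom_altdef poly_const_pow)
lemma Ypow: "Y ^ n = monom 1 n"
  by (simp add: Y_def monom_altdef)

lemma mcoeff_Xpow[simp]: "mcoeff (X ^ n * P) a b = (if a < n then 0 else mcoeff P (a - n) b)"
  by (simp add: Xpow mcoeff_def coeff_monom_mult)
lemma mcoeff_Ypow[simp]: "mcoeff (Y ^ n * P) a b = (if b < n then 0 else mcoeff P a (b - n))"
  by (simp add: Ypow mcoeff_def coeff_monom_mult)
lemma mcoeff_X[simp]: "mcoeff (X * P) a b = (if a < 1 then 0 else mcoeff P (a - 1) b)"
  using mcoeff_Xpow[of 1] by simp
lemma mcoeff_Y[simp]: "mcoeff (Y * P) a b = (if b < 1 then 0 else mcoeff P a (b - 1))"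
  using mcoeff_Ypow[of 1] by simp


lemma Leq_trans: "Leq p q u v \<Longrightarrow> Leq p q v w \<Longrightarrow> Leq p q u w"
  unfolding Leq_def
proof (elim exE conjE)
  fix k1 k2 assume "fst u - fst v = k1 * (int p - 1)" "snd u - snd v = - k1 * (int q - 1)"
    "fst v - fst w = k2 * (int p - 1)" "snd v - snd w = - k2 * (int q - 1)"
  then show "\<exists>k. fst u - fst w = k * (int p - 1) \<and> snd u - snd w = - k * (int q - 1)"
    by (intro exI[of _ "k1 + k2"]) (simp add: algebra_simps)
qed

lemma homog_cong: "homog p q P d \<Longrightarrow> Leq p q d d' \<Longrightarrow> homog p q P d'"
  unfolding homog_def using Leq_trans by blast

lemma homog_0[simp]: "homog p q 0 d" by (simp add: homog_def)

lemma homog_add: "homog p q P d \<Longrightarrow> homog p q Q d \<Longrightarrow> homog p q (P + Q) d"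
  unfolding homog_def by (metis add.right_neutral add_0 mcoeff_add)
lemma homog_uminus: "homog p q P d \<Longrightarrow> homog p q (- P) d"
  unfolding homog_def by simp
lemma homog_diff: "homog p q P d \<Longrightarrow> homog p q Q d \<Longrightarrow> homog p q (P - Q) d"
  using homog_add[of p q P d "- Q"] homog_uminus by simp

lemma homog_Xpow: "homog p q P d \<Longrightarrow> homog p q (X ^ n * P) (fst d + int n, snd d)"
  unfolding homog_def Leq_def
  apply (auto split: if_splits)
  apply (drule spec, drule spec, drule mp, assumption)
  apply (elim exE, rule_tac x=k in exI, auto simp: of_nat_diff)
  done

lemma homog_Ypow: "homog p q P d \<Longrightarrow> homog p q (Y ^ n * P) (fst d, snd d + int n)"
  unfolding homog_def Leq_def
  apply (auto split: if_splits)
  apply (drule spec, drule spec, drule mp, assumption)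
  apply (elim exE, rule_tac x=k in exI, auto simp: of_nat_diff)
  done

definition xd :: "bpoly \<Rightarrow> bpoly" where "xd w = map_poly (poly_shift 1) w"
definition xk :: "nat \<Rightarrow> bpoly \<Rightarrow> bpoly" where "xk m w = poly_shift m (map_poly (poly_cutoff 1) w)"
definition yd :: "bpoly \<Rightarrow> bpoly" where "yd w = poly_shift 1 w"
definition yk :: "nat \<Rightarrow> bpoly \<Rightarrow> bpoly" where "yk m w = map_poly (poly_shift m) (poly_cutoff 1 w)"

lemma mcoeff_xd[simp]: "mcoeff (xd w) a b = mcoeff w (a + 1) b"
  by (simp add: xd_def mcoeff_def coeff_map_poly coeff_poly_shift)
lemma mcoeff_xk[simp]: "mcoeff (xk m w) a b = (if a = 0 then mcoeff w 0 (b + m) else 0)"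
  by (simp add: xk_def mcoeff_def coeff_map_poly coeff_poly_shift coeff_poly_cutoff)
lemma mcoeff_yd[simp]: "mcoeff (yd w) a b = mcoeff w a (b + 1)"
  by (simp add: yd_def mcoeff_def coeff_poly_shift)
lemma mcoeff_yk[simp]: "mcoeff (yk m w) a b = (if b = 0 then mcoeff w (a + m) 0 else 0)"
  by (simp add: yk_def mcoeff_def coeff_map_poly coeff_poly_shift coeff_poly_cutoff)

lemma homog_xd: "homog p q w d \<Longrightarrow> homog p q (xd w) (fst d - 1, snd d)"
  unfolding homog_def Leq_def
  apply auto
  apply (drule spec, drule spec, drule mp, assumption)
  apply (elim exE, rule_tac x=k in exI, auto)
  done
lemma homog_yd: "homog p q w d \<Longrightarrow> homog p q (yd w) (fst d, snd d - 1)"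
  unfolding homog_def Leq_def
  apply auto
  apply (drule spec, drule spec, drule mp, assumption)
  apply (elim exE, rule_tac x=k in exI, auto)
  done
lemma homog_xk: "homog p q w d \<Longrightarrow> homog p q (xk m w) (fst d, snd d - int m)"
  unfolding homog_def Leq_def
  apply (auto split: if_splits)
  apply (drule spec, drule spec, drule mp, assumption)
  apply (elim exE, rule_tac x=k in exI, auto)
  done
lemma homog_yk: "homog p q w d \<Longrightarrow> homog p q (yk m w) (fst d - int m, snd d)"
  unfolding homog_def Leq_def
  apply (auto split: if_splits)
  apply (drule spec, drule spec, drule mp, assumption)
  apply (elim exE, rule_tac x=k in exI, auto)
  done

lemma decompX: assumes "\<forall>b<m. mcoeff w 0 b = 0"
  shows "w = X * xd w + Y ^ m * xk m w"
  unfolding mcoeff_eq_iff using assms by auto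

lemma decompY: assumes "\<forall>a<m. mcoeff w a 0 = 0"
  shows "w = Y * yd w + X ^ m * yk m w"
  unfolding mcoeff_eq_iff using assms by auto

lemma X_nz: "X \<noteq> 0" by (simp add: X_def)
lemma Y_nz: "Y \<noteq> 0" by (simp add: Y_def)

lemma divA_X: assumes "u * X = fpol p q * w" "2 \<le> p"
  shows "w = X * xd w \<and> u = fpol p q * xd w"
proof -
  have e: "X * u = X ^ (p - 1) * w + Y ^ (q - 1) * w"
    using assms(1) by (simp add: fpol_def algebra_simps)
  have z: "mcoeff w 0 b = 0" for b
  proof -
    have "mcoeff (X * u) 0 (b + (q - 1)) = mcoeff (X ^ (p - 1) * w + Y ^ (q - 1) * w) 0 (b + (q - 1))"
      using e by simp
    then show ?thesis using assms(2) by simp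
  qed
  have w: "w = X * xd w" unfolding mcoeff_eq_iff
  proof (intro allI)
    fix a b show "mcoeff w a b = mcoeff (X * xd w) a b" using z by (cases a) auto
  qed
  have "X * u = X * (fpol p q * xd w)"
    using assms(1) w by (simp add: algebra_simps)
  then have "u = fpol p q * xd w" using X_nz by simp
  with w show ?thesis by simp
qed

lemma divA_Y: assumes "u * Y = fpol p q * w" "2 \<le> q"
  shows "w = Y * yd w \<and> u = fpol p q * yd w"
proof -
  have e: "Y * u = X ^ (p - 1) * w + Y ^ (q - 1) * w"
    using assms(1) by (simp add: fpol_def algebra_simps)
  have z: "mcoeff w a 0 = 0" for a
  proof -
    have "mcoeff (Y * u) (a + (p - 1)) 0 = mcoeff (X ^ (p - 1) * w + Y ^ (q - 1) * w) (a + (p - 1)) 0"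
      using e by simp
    then show ?thesis using assms(2) by simp
  qed
  have w: "w = Y * yd w" unfolding mcoeff_eq_iff
  proof (intro allI)
    fix a b show "mcoeff w a b = mcoeff (Y * yd w) a b" using z by (cases b) auto
  qed
  have "Y * u = Y * (fpol p q * yd w)"
    using assms(1) w by (simp add: algebra_simps)
  then have "u = fpol p q * yd w" using Y_nz by simp
  with w show ?thesis by simp
qed

lemma decB_X: assumes "\<forall>b<q-1. mcoeff w 0 b = 0" "2 \<le> p"
  shows "w = X * (xd w - X^(p-2) * xk (q-1) w) + fpol p q * xk (q-1) w"
proof -
  have "X * X^(p-2) = X^(p-1)" using assms(2)
    by (metis One_nat_def Suc_diff_Suc Suc_le_lessD numeral_2_eq_2 power_Suc)
  then have "X * (xd w - X^(p-2) * xk (q-1) w) + fpol p q * xk (q-1) w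
     = X * xd w + Y^(q-1) * xk (q-1) w"
    by (simp add: fpol_def algebra_simps)
  also have "\<dots> = w" using decompX[OF assms(1)] by simp
  finally show ?thesis by simp
qed

lemma decB_Y: assumes "\<forall>a<p-1. mcoeff w a 0 = 0" "2 \<le> q"
  shows "w = Y * (yd w - Y^(q-2) * yk (p-1) w) + fpol p q * yk (p-1) w"
proof -
  have "Y * Y^(q-2) = Y^(q-1)" using assms(2)
    by (metis One_nat_def Suc_diff_Suc Suc_le_lessD numeral_2_eq_2 power_Suc)
  then have "Y * (yd w - Y^(q-2) * yk (p-1) w) + fpol p q * yk (p-1) w
     = Y * yd w + X^(p-1) * yk (p-1) w"
    by (simp add: fpol_def algebra_simps)
  also have "\<dots> = w" using decompY[OF assms(1)] by simp
  finally show ?thesis by simp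
qed

lemma homB_X: assumes "homog p q w D" "2 \<le> p" "2 \<le> q"
  shows "homog p q (xd w - X^(p-2) * xk (q-1) w) (fst D - 1, snd D)"
proof -
  have "homog p q (X^(p-2) * xk (q-1) w) (fst D + int (p - 2), snd D - int (q - 1))"
    using homog_Xpow[OF homog_xk[OF assms(1)]] by simp
  then have "homog p q (X^(p-2) * xk (q-1) w) (fst D - 1, snd D)"
    by (rule homog_cong) (use assms(2,3) in \<open>auto simp: Leq_def intro!: exI[of _ 1]\<close>)
  then show ?thesis using homog_diff homog_xd[OF assms(1)] by blast
qed

lemma homB_Y: assumes "homog p q w D" "2 \<le> q" "2 \<le> p"
  shows "homog p q (yd w - Y^(q-2) * yk (p-1) w) (fst D, snd D - 1)"
proof -
  have "homog p q (Y^(q-2) * yk (p-1) w) (fst D - int (p - 1), snd D + int (q - 2))"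
    using homog_Ypow[OF homog_yk[OF assms(1)]] by simp
  then have "homog p q (Y^(q-2) * yk (p-1) w) (fst D, snd D - 1)"
    by (rule homog_cong) (use assms(2,3) in \<open>auto simp: Leq_def intro!: exI[of _ "-1"]\<close>)
  then show ?thesis using homog_diff homog_yd[OF assms(1)] by blast
qed

lemma homog_eqI: "homog p q P d \<Longrightarrow> d = d' \<Longrightarrow> homog p q P d'" by simp

lemma Leq_phi: "Leq p q u v \<Longrightarrow> \<exists>m. (fst u - fst v) - int p * (snd u - snd v) = m * (int p * int q - 1)"
  unfolding Leq_def
proof (elim exE conjE)
  fix k assume a: "fst u - fst v = k * (int p - 1)" "snd u - snd v = - k * (int q - 1)"
  show "\<exists>m. (fst u - fst v) - int p * (snd u - snd v) = m * (int p * int q - 1)"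
    by (rule exI[of _ k]) (simp add: a algebra_simps)
qed

lemma nodiv: assumes "(z::int) = m * (P - 1)" "0 < z" "z < P - 1" shows False
proof (cases "m \<le> 0")
  case True
  then have "m * (P - 1) \<le> 0" using assms by (simp add: mult_nonpos_nonneg)
  then show False using assms by simp
next
  case False
  have "0 \<le> P - 1" using assms by linarith
  then have "1 * (P - 1) \<le> m * (P - 1)" using False by (intro mult_right_mono) auto
  then have "P - 1 \<le> z" using assms(1) by (simp only: mult_1)
  then show False using assms by linarith
qed

lemma nodiv': assumes "(z::int) = m * (P - 1)" "z < 0" "- z < P - 1" shows False
  using nodiv[of "- z" "- m" P] assms by simp

lemma NTX: assumes "2 \<le> p" "2 \<le> q" "1 \<le> r" "r \<le> int p - 1" "b < q - 1"
    "Leq p q (0, int b) (r + k * int p, k)"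
  shows False
proof -
  obtain m where m: "(0 - (r + k * int p)) - int p * (int b - k) = m * (int p * int q - 1)"
    using Leq_phi[OF assms(6)] by auto
  have z: "- r - int p * int b = m * (int p * int q - 1)" using m by (simp add: algebra_simps)
  have "int p * int b \<le> int p * (int q - 2)" using assms by (intro mult_left_mono) auto
  moreover have "int p * (int q - 2) = int p * int q - 2 * int p" by (simp add: algebra_simps)
  moreover have "0 \<le> int p * int b" by simp
  ultimately show False using nodiv'[OF z] assms by linarith
qed

lemma NTY2: assumes "2 \<le> p" "2 \<le> q" "1 \<le> i" "i \<le> q - 1" "a < p - 1"
    "Leq p q (int a, 0) (k * int p, int q - int i + k)"
  shows False
proof -
  obtain m where m: "(int a - k * int p) - int p * (0 - (int q - int i + k)) = m * (int p * int q - 1)"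
    using Leq_phi[OF assms(6)] by auto
  have z: "int a + int p * (int q - int i) = m * (int p * int q - 1)" using m by (simp add: algebra_simps)
  have "int p * (int q - int i) \<le> int p * (int q - 1)" using assms by (intro mult_left_mono) auto
  moreover have "int p * 1 \<le> int p * (int q - int i)" using assms by (intro mult_left_mono) auto
  moreover have "int p * (int q - 1) = int p * int q - int p" by (simp add: algebra_simps)
  ultimately show False using nodiv[OF z] assms by linarith
qed

lemma NTY4: assumes "2 \<le> p" "2 \<le> q" "1 \<le> i" "i \<le> q - 1" "a < p - 1"
    "Leq p q (int a, 0) (int p - 1 + k * int p, k - (int q - (int i + 1)))"
  shows False
proof -
  obtain m where m: "(int a - (int p - 1 + k * int p)) - int p * (0 - (k - (int q - (int i + 1)))) = m * (int p * int q - 1)"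
    using Leq_phi[OF assms(6)] by auto
  have z: "int a - (int p - 1) - int p * (int q - int i - 1) = m * (int p * int q - 1)" using m by (simp add: algebra_simps)
  have "int p * (int q - int i - 1) \<le> int p * (int q - 2)" using assms by (intro mult_left_mono) auto
  moreover have "0 \<le> int p * (int q - int i - 1)" using assms by simp
  moreover have "int p * (int q - 2) = int p * int q - 2 * int p" by (simp add: algebra_simps)
  ultimately show False using nodiv'[OF z] assms by linarith
qed

lemmas U = is_mor_def null_htp_def Kxi_def Kyj_def Kf_def twist_def Kx_def Ky_def dsub_def dadd_def cdeg_def shift1_def

lemma X1: assumes "2 \<le> p" "is_mor p q (Kxi p q i) (twist (k*int p, k) (Kf p q)) u0 u1"
  shows "null_htp p q (Kxi p q i) (twist (k*int p,k) (Kf p q)) u0 u1"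
  using assms(2) apply (simp add: U)
  apply (elim conjE)
  subgoal premises H proof -
    define v where "v = xd (u1 0 0)"
    have D: "u1 0 0 = X * v \<and> u0 0 0 = fpol p q * v" using divA_X[OF H(3) assms(1)] v_def by simp
    have hv: "homog p q v (k * int p - int i, k)"
      unfolding v_def by (rule homog_eqI[OF homog_xd[OF H(2)]]) (simp add: algebra_simps)
    show ?thesis
      apply (rule exI[of _ "\<lambda>_ _. v"]) apply (rule conjI) using hv apply simp
      apply (rule exI[of _ "\<lambda>_ _. 0"]) using D by (simp add: algebra_simps)
  qed
  done

lemma X3: assumes "2 \<le> p" "is_mor p q (Kf p q) (twist (k*int p, k) (Kxi p q i)) u0 u1"
  shows "null_htp p q (Kf p q) (twist (k*int p,k) (Kxi p q i)) u0 u1"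
  using assms(2) apply (simp add: U)
  apply (elim conjE)
  subgoal premises H proof -
    define v where "v = xd (u0 0 0)"
    have e: "u1 0 0 * X = fpol p q * u0 0 0" using H(3) by (simp add: algebra_simps)
    have D: "u0 0 0 = X * v \<and> u1 0 0 = fpol p q * v" using divA_X[OF e assms(1)] v_def by simp
    have hv: "homog p q v (k * int p - (int p - int i), k)"
      unfolding v_def by (rule homog_eqI[OF homog_xd[OF H(1)]]) (simp add: algebra_simps)
    show ?thesis
      apply (rule exI[of _ "\<lambda>_ _. v"]) apply (rule conjI) using hv apply simp
      apply (rule exI[of _ "\<lambda>_ _. 0"]) using D by (simp add: algebra_simps)
  qed
  done

lemma Y1: assumes "2 \<le> q" "is_mor p q (Kyj p q i) (twist (k*int p, k) (Kf p q)) u0 u1"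
  shows "null_htp p q (Kyj p q i) (twist (k*int p,k) (Kf p q)) u0 u1"
  using assms(2) apply (simp add: U)
  apply (elim conjE)
  subgoal premises H proof -
    define v where "v = yd (u1 0 0)"
    have D: "u1 0 0 = Y * v \<and> u0 0 0 = fpol p q * v" using divA_Y[OF H(3) assms(1)] v_def by simp
    have hv: "homog p q v (k * int p - (int p - 1), int q - (int i + 1) + k)"
      unfolding v_def by (rule homog_eqI[OF homog_yd[OF H(2)]]) (simp add: algebra_simps)
    show ?thesis
      apply (rule exI[of _ "\<lambda>_ _. v"]) apply (rule conjI) using hv apply simp
      apply (rule exI[of _ "\<lambda>_ _. 0"]) using D by (simp add: algebra_simps)
  qed
  done

lemma Y3: assumes "2 \<le> q" "is_mor p q (Kf p q) (twist (k*int p, k) (Kyj p q i)) u0 u1"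
  shows "null_htp p q (Kf p q) (twist (k*int p,k) (Kyj p q i)) u0 u1"
  using assms(2) apply (simp add: U)
  apply (elim conjE)
  subgoal premises H proof -
    define v where "v = yd (u0 0 0)"
    have e: "u1 0 0 * Y = fpol p q * u0 0 0" using H(3) by (simp add: algebra_simps)
    have D: "u0 0 0 = Y * v \<and> u1 0 0 = fpol p q * v" using divA_Y[OF e assms(1)] v_def by simp
    have hv: "homog p q v (k * int p, k - (int q - int i))"
      unfolding v_def by (rule homog_eqI[OF homog_yd[OF H(1)]]) (simp add: algebra_simps)
    show ?thesis
      apply (rule exI[of _ "\<lambda>_ _. v"]) apply (rule conjI) using hv apply simp
      apply (rule exI[of _ "\<lambda>_ _. 0"]) using D by (simp add: algebra_simps)
  qed
  done

lemma Leq1: "fst u - fst v = int p - 1 \<Longrightarrow> snd u - snd v = - (int q - 1) \<Longrightarrow> Leq p q u v"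
  unfolding Leq_def by (rule exI[of _ 1]) simp
lemma Leqm1: "fst u - fst v = - (int p - 1) \<Longrightarrow> snd u - snd v = int q - 1 \<Longrightarrow> Leq p q u v"
  unfolding Leq_def by (rule exI[of _ "-1"]) simp

lemma X2: assumes "2 \<le> p" "2 \<le> q" "1 \<le> i" "i \<le> p - 1"
  "is_mor p q (Kxi p q i) (shift1 p (twist (k*int p, k) (Kf p q))) u0 u1"
  shows "null_htp p q (Kxi p q i) (shift1 p (twist (k*int p,k) (Kf p q))) u0 u1"
  using assms(5) apply (simp add: U)
  apply (elim conjE)
  subgoal premises H proof -
    define w where "w = u1 0 0"
    define g where "g = xd w - X^(p-2) * xk (q-1) w"
    define kk where "kk = xk (q-1) w"
    have z: "\<forall>b<q-1. mcoeff w 0 b = 0"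
    proof (intro allI impI, rule ccontr)
      fix b assume b: "b < q - 1" "mcoeff w 0 b \<noteq> 0"
      then have "Leq p q (0, int b) (int p - int i + k * int p, k)"
        using H(2) unfolding homog_def w_def by fastforce
      then show False using NTX[of p q "int p - int i" b k] assms b by linarith
    qed
    have dec: "w = X * g + fpol p q * kk" using decB_X[OF z assms(1)] g_def kk_def by simp
    have "X * u0 0 0 = X * (- (Y * w))" using H(3) w_def by (simp add: algebra_simps)
    then have u0: "u0 0 0 = - (Y * (X * g + fpol p q * kk))" unfolding dec[symmetric] by (metis X_nz mult_left_cancel)
    have hg: "homog p q g (int p - (int i + 1) + k * int p, k)"
      unfolding g_def by (rule homog_eqI[OF homB_X[OF H(2)[folded w_def] assms(1,2)]]) (simp add: algebra_simps)
    have hk0: "homog p q kk (int p - int i + k * int p, k - int (q - 1))"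
      unfolding kk_def using homog_xk[OF H(2)[folded w_def]] by simp
    have hk: "homog p q (- kk) (- int i - (- 1 - k * int p), k)"
      by (rule homog_uminus, rule homog_cong[OF hk0], rule Leq1) (use assms in auto)
    show ?thesis
      apply (rule exI[of _ "\<lambda>_ _. g"]) apply (rule conjI) using hg apply simp
      apply (rule exI[of _ "\<lambda>_ _. - kk"]) apply (rule conjI) using hk apply simp
      unfolding u0 dec[unfolded w_def] by (simp add: algebra_simps)
  qed
  done

lemma X4: assumes "2 \<le> p" "2 \<le> q" "1 \<le> i" "i \<le> p - 1"
  "is_mor p q (Kf p q) (shift1 p (twist (k*int p, k) (Kxi p q i))) u0 u1"
  shows "null_htp p q (Kf p q) (shift1 p (twist (k*int p,k) (Kxi p q i))) u0 u1"
  using assms(5) apply (simp add: U)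
  apply (elim conjE)
  subgoal premises H proof -
    define w where "w = u1 0 0"
    define g where "g = xd w - X^(p-2) * xk (q-1) w"
    define kk where "kk = xk (q-1) w"
    have z: "\<forall>b<q-1. mcoeff w 0 b = 0"
    proof (intro allI impI, rule ccontr)
      fix b assume b: "b < q - 1" "mcoeff w 0 b \<noteq> 0"
      then have "Leq p q (0, int b) (int i + k * int p, k)"
        using H(2) unfolding homog_def w_def by fastforce
      then show False using NTX[of p q "int i" b k] assms b by linarith
    qed
    have dec: "w = X * g + fpol p q * kk" using decB_X[OF z assms(1)] g_def kk_def by simp
    have "X * u0 0 0 = X * (- (Y * w))" using H(4) w_def by (simp add: algebra_simps)
    then have u0: "u0 0 0 = - (Y * (X * g + fpol p q * kk))" unfolding dec[symmetric] by (metis X_nz mult_left_cancel)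
    have hg: "homog p q (- g) (- 1 - (- int i - k * int p), k)"
      unfolding g_def by (rule homog_uminus, rule homog_eqI[OF homB_X[OF H(2)[folded w_def] assms(1,2)]]) (simp add: algebra_simps)
    have hk0: "homog p q kk (int i + k * int p, k - int (q - 1))"
      unfolding kk_def using homog_xk[OF H(2)[folded w_def]] by simp
    have hk: "homog p q kk (k * int p - (int p - (int i + 1)), k)"
      by (rule homog_cong[OF hk0], rule Leq1) (use assms in auto)
    show ?thesis
      apply (rule exI[of _ "\<lambda>_ _. kk"]) apply (rule conjI) using hk apply simp
      apply (rule exI[of _ "\<lambda>_ _. - g"]) apply (rule conjI) using hg apply simp
      unfolding u0 dec[unfolded w_def] by (simp add: algebra_simps)
  qed
  done

lemma Y2: assumes "2 \<le> p" "2 \<le> q" "1 \<le> i" "i \<le> q - 1"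
  "is_mor p q (Kyj p q i) (shift1 p (twist (k*int p, k) (Kf p q))) u0 u1"
  shows "null_htp p q (Kyj p q i) (shift1 p (twist (k*int p,k) (Kf p q))) u0 u1"
  using assms(5) apply (simp add: U)
  apply (elim conjE)
  subgoal premises H proof -
    define w where "w = u1 0 0"
    define g where "g = yd w - Y^(q-2) * yk (p-1) w"
    define kk where "kk = yk (p-1) w"
    have z: "\<forall>a<p-1. mcoeff w a 0 = 0"
    proof (intro allI impI, rule ccontr)
      fix a assume a: "a < p - 1" "mcoeff w a 0 \<noteq> 0"
      then have "Leq p q (int a, 0) (k * int p, int q - int i + k)"
        using H(2) unfolding homog_def w_def by fastforce
      then show False using NTY2[of p q i a k] assms a by linarith
    qed
    have dec: "w = Y * g + fpol p q * kk" using decB_Y[OF z assms(2)] g_def kk_def by simp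
    have "Y * u0 0 0 = Y * (- (X * w))" using H(3) w_def by (simp add: algebra_simps)
    then have u0: "u0 0 0 = - (X * (Y * g + fpol p q * kk))" unfolding dec[symmetric] by (metis Y_nz mult_left_cancel)
    have hg: "homog p q g (k * int p, int q - (int i + 1) + k)"
      unfolding g_def by (rule homog_eqI[OF homB_Y[OF H(2)[folded w_def] assms(2,1)]]) (simp add: algebra_simps)
    have hk: "homog p q (- kk) (- int p - (- 1 - k * int p), int q + (k - int i))"
      unfolding kk_def by (rule homog_uminus, rule homog_eqI[OF homog_yk[OF H(2)[folded w_def]]]) (use assms in \<open>simp add: algebra_simps of_nat_diff\<close>)
    show ?thesis
      apply (rule exI[of _ "\<lambda>_ _. g"]) apply (rule conjI) using hg apply simp
      apply (rule exI[of _ "\<lambda>_ _. - kk"]) apply (rule conjI) using hk apply simp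
      unfolding u0 dec[unfolded w_def] by (simp add: algebra_simps)
  qed
  done

lemma Y4: assumes "2 \<le> p" "2 \<le> q" "1 \<le> i" "i \<le> q - 1"
  "is_mor p q (Kf p q) (shift1 p (twist (k*int p, k) (Kyj p q i))) u0 u1"
  shows "null_htp p q (Kf p q) (shift1 p (twist (k*int p,k) (Kyj p q i))) u0 u1"
  using assms(5) apply (simp add: U)
  apply (elim conjE)
  subgoal premises H proof -
    define w where "w = u1 0 0"
    define g where "g = yd w - Y^(q-2) * yk (p-1) w"
    define kk where "kk = yk (p-1) w"
    have z: "\<forall>a<p-1. mcoeff w a 0 = 0"
    proof (intro allI impI, rule ccontr)
      fix a assume a: "a < p - 1" "mcoeff w a 0 \<noteq> 0"
      then have "Leq p q (int a, 0) (int p - 1 + k * int p, k - (int q - (int i + 1)))"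
        using H(2) unfolding homog_def w_def by fastforce
      then show False using NTY4[of p q i a k] assms a by linarith
    qed
    have dec: "w = Y * g + fpol p q * kk" using decB_Y[OF z assms(2)] g_def kk_def by simp
    have "Y * u0 0 0 = Y * (- (X * w))" using H(4) w_def by (simp add: algebra_simps)
    then have u0: "u0 0 0 = - (X * (Y * g + fpol p q * kk))" unfolding dec[symmetric] by (metis Y_nz mult_left_cancel)
    have hg: "homog p q (- g) (- 1 - (- (k * int p) - int p), int i + k - int q)"
      unfolding g_def by (rule homog_uminus, rule homog_eqI[OF homB_Y[OF H(2)[folded w_def] assms(2,1)]]) (simp add: algebra_simps)
    have hk: "homog p q kk (k * int p, k - (int q - (int i + 1)))"
      unfolding kk_def by (rule homog_eqI[OF homog_yk[OF H(2)[folded w_def]]]) (use assms in \<open>simp add: algebra_simps of_nat_diff\<close>)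
    show ?thesis
      apply (rule exI[of _ "\<lambda>_ _. kk"]) apply (rule conjI) using hk apply simp
      apply (rule exI[of _ "\<lambda>_ _. - g"]) apply (rule conjI) using hg apply simp
      unfolding u0 dec[unfolded w_def] by (simp add: algebra_simps)
  qed
  done

lemma shiftn_eq: "shiftn p n M = (if even n then twist (n div 2 * int p, n div 2) M
   else shift1 p (twist (n div 2 * int p, n div 2) M))"
  by (simp add: shiftn_def Let_def)

lemma hv1: assumes "2 \<le> p" "2 \<le> q" "1 \<le> i" "i \<le> p - 1"
  shows "hom_vanish p q (Kxi p q i) (Kf p q)"
  unfolding hom_vanish_def
proof (intro allI impI)
  fix n u0 u1 assume "is_mor p q (Kxi p q i) (shiftn p n (Kf p q)) u0 u1"
  then show "null_htp p q (Kxi p q i) (shiftn p n (Kf p q)) u0 u1"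
    unfolding shiftn_eq using X1[OF assms(1)] X2[OF assms] by (cases "even n") auto
qed

lemma hv2: assumes "2 \<le> p" "2 \<le> q" "1 \<le> i" "i \<le> p - 1"
  shows "hom_vanish p q (Kf p q) (Kxi p q i)"
  unfolding hom_vanish_def
proof (intro allI impI)
  fix n u0 u1 assume "is_mor p q (Kf p q) (shiftn p n (Kxi p q i)) u0 u1"
  then show "null_htp p q (Kf p q) (shiftn p n (Kxi p q i)) u0 u1"
    unfolding shiftn_eq using X3[OF assms(1)] X4[OF assms] by (cases "even n") auto
qed

lemma hv3: assumes "2 \<le> p" "2 \<le> q" "1 \<le> i" "i \<le> q - 1"
  shows "hom_vanish p q (Kyj p q i) (Kf p q)"
  unfolding hom_vanish_def
proof (intro allI impI)
  fix n u0 u1 assume "is_mor p q (Kyj p q i) (shiftn p n (Kf p q)) u0 u1"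
  then show "null_htp p q (Kyj p q i) (shiftn p n (Kf p q)) u0 u1"
    unfolding shiftn_eq using Y1[OF assms(2)] Y2[OF assms] by (cases "even n") auto
qed

lemma hv4: assumes "2 \<le> p" "2 \<le> q" "1 \<le> i" "i \<le> q - 1"
  shows "hom_vanish p q (Kf p q) (Kyj p q i)"
  unfolding hom_vanish_def
proof (intro allI impI)
  fix n u0 u1 assume "is_mor p q (Kf p q) (shiftn p n (Kyj p q i)) u0 u1"
  then show "null_htp p q (Kf p q) (shiftn p n (Kyj p q i)) u0 u1"
    unfolding shiftn_eq using Y3[OF assms(2)] Y4[OF assms] by (cases "even n") auto
qed

theorem lemma2p8:
  fixes p q :: nat
  assumes "2 \<le> p" and "2 \<le> q"
  shows "(\<forall>i. 1 \<le> i \<and> i \<le> p - 1 \<longrightarrow> orthogonal p q (Kxi p q i) (Kf p q))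
       \<and> (\<forall>j. 1 \<le> j \<and> j \<le> q - 1 \<longrightarrow> orthogonal p q (Kyj p q j) (Kf p q))"
  using hv1[OF assms] hv2[OF assms] hv3[OF assms] hv4[OF assms]
  by (auto simp: orthogonal_def)

end
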